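(* Let $G$ be a $6$-regular graph, $\mathcal S$ a canonical path partition of $G$, and $P$ a path component with end-vertices $o_1,o_2$. Let $x_1,x_2\in V_2$ be path neighbors on $P$, with $x_1$ immediately preceding $x_2$ when $P$ is traversed from $o_1$ to $o_2$, and suppose neither $x_1$ nor $x_2$ is joined by a free edge to a dangerous vertex. If $b(\{x_1\})+b(\{x_2\})>\frac73$, then $x_1$ goes to $o_1$ and $x_2$ goes to $o_2$.
   Context: All graphs are finite, simple and undirected. A path partition of $G=(V,E)$ is a set of vertex-disjoint paths (single vertices allowed) covering $V$; its members are components. A component with $t\ge3$ vertices is a cycle component if the subgraph induced on its vertex set has a spanning cycle; a one-vertex component is an isolated vertex; every other component is a path component. A path partition is canonical if (1) it has the minimum number of components among all path partitions of $G$; (2) among those, it has the maximum number of cycle components; (3) it has no isolated vertices. Given a canonical path partition $\mathcal S$ of $G$: two vertices are path neighbors if they are consecutive on a path component. An edge of $G$ is a free edge unless it joins two path neighbors or has both endpoints in the same cycle component. $V_1$ is the set of end-vertices of path components together with all vertices of cycle components. The remaining vertices are classified by the first applicable rule: $V_2$: joined by a free edge to a vertex of $V_1$; $V_3$: both path neighbors lie in $V_2$; $V_4$: exactly one path neighbor lies in $V_2$; $V_5$: all others. A balanced edge is a free edge with one endpoint in $V_1$ and the other in $V_2$; for $x\in V_2$, $y\in V_1$ we say $x$ goes to $y$ if $xy$ is a balanced edge. A vertex of $V_2$ is moderate if it is incident to at least two balanced edges, at least one of whose other endpoints is an end-vertex of a path component; it is heavy if it is incident to at least three balanced edges whose other endpoints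 are end-vertices of path components. A vertex of $V_3$ is dangerous if one of its path neighbors is heavy and the other is moderate. For $Y\subseteq V_2$, $b(Y)$ is the sum, over all balanced edges $xy$ with $x\in Y$ and $y\in V_1$, of $2/3$ if $y$ is an end-vertex of a path component, $1/|V(C)|$ if $y$ lies in a cycle component $C$ with $|V(C)|\le 6$, and $0$ if $y$ lies in a cycle component with at least $7$ vertices. *)

theory Defs
  imports Complex_Main
begin

definition simple_graph :: "'a set \<Rightarrow> ('a \<Rightarrow> 'a \<Rightarrow> bool) \<Rightarrow> bool" where
  "simple_graph V E \<longleftrightarrow> finite V \<and> (\<forall>u v. E u v \<longrightarrow> u \<in> V \<and> v \<in> V)
     \<and> (\<forall>u v. E u v \<longrightarrow> E v u) \<and> (\<forall>u. \<not> E u u)"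

definition regular :: "'a set \<Rightarrow> ('a \<Rightarrow> 'a \<Rightarrow> bool) \<Rightarrow> nat \<Rightarrow> bool" where
  "regular V E k \<longleftrightarrow> (\<forall>v\<in>V. card {u\<in>V. E v u} = k)"

definition is_path :: "('a \<Rightarrow> 'a \<Rightarrow> bool) \<Rightarrow> 'a list \<Rightarrow> bool" where
  "is_path E p \<longleftrightarrow> p \<noteq> [] \<and> distinct p \<and> (\<forall>i. Suc i < length p \<longrightarrow> E (p!i) (p!Suc i))"

definition path_partition :: "'a set \<Rightarrow> ('a \<Rightarrow> 'a \<Rightarrow> bool) \<Rightarrow> 'a list set \<Rightarrow> bool" where
  "path_partition V E S \<longleftrightarrow> finite S \<and> (\<forall>p\<in>S. is_path E p) \<and> (\<Union>p\<in>S. set p) = V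
     \<and> (\<forall>p\<in>S. \<forall>q\<in>S. p \<noteq> q \<longrightarrow> set p \<inter> set q = {})"

definition cycle_comp :: "('a \<Rightarrow> 'a \<Rightarrow> bool) \<Rightarrow> 'a list \<Rightarrow> bool" where
  "cycle_comp E p \<longleftrightarrow> length p \<ge> 3 \<and>
     (\<exists>q. distinct q \<and> set q = set p \<and> (\<forall>i. Suc i < length q \<longrightarrow> E (q!i) (q!Suc i))
          \<and> E (last q) (hd q))"

definition num_cycles :: "('a \<Rightarrow> 'a \<Rightarrow> bool) \<Rightarrow> 'a list set \<Rightarrow> nat" where
  "num_cycles E S = card {p\<in>S. cycle_comp E p}"

definition canonical :: "'a set \<Rightarrow> ('a \<Rightarrow> 'a \<Rightarrow> bool) \<Rightarrow> 'a list set \<Rightarrow> bool" where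
  "canonical V E S \<longleftrightarrow> path_partition V E S
     \<and> (\<forall>S'. path_partition V E S' \<longrightarrow> card S \<le> card S')
     \<and> (\<forall>S'. path_partition V E S' \<and> card S' = card S \<longrightarrow> num_cycles E S' \<le> num_cycles E S)
     \<and> (\<forall>p\<in>S. length p \<ge> 2)"

definition path_comp :: "('a \<Rightarrow> 'a \<Rightarrow> bool) \<Rightarrow> 'a list set \<Rightarrow> 'a list \<Rightarrow> bool" where
  "path_comp E S p \<longleftrightarrow> p \<in> S \<and> \<not> cycle_comp E p \<and> length p \<ge> 2"

definition path_nbr :: "('a \<Rightarrow> 'a \<Rightarrow> bool) \<Rightarrow> 'a list set \<Rightarrow> 'a \<Rightarrow> 'a \<Rightarrow> bool" where
  "path_nbr E S u v \<longleftrightarrow> (\<exists>p. path_comp E S p \<and> (\<exists>i. Suc i < length p \<and>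
      ((p!i = u \<and> p!Suc i = v) \<or> (p!i = v \<and> p!Suc i = u))))"

definition same_cycle :: "('a \<Rightarrow> 'a \<Rightarrow> bool) \<Rightarrow> 'a list set \<Rightarrow> 'a \<Rightarrow> 'a \<Rightarrow> bool" where
  "same_cycle E S u v \<longleftrightarrow> (\<exists>p\<in>S. cycle_comp E p \<and> u \<in> set p \<and> v \<in> set p)"

definition free_edge :: "('a \<Rightarrow> 'a \<Rightarrow> bool) \<Rightarrow> 'a list set \<Rightarrow> 'a \<Rightarrow> 'a \<Rightarrow> bool" where
  "free_edge E S u v \<longleftrightarrow> E u v \<and> \<not> path_nbr E S u v \<and> \<not> same_cycle E S u v"

definition ends :: "('a \<Rightarrow> 'a \<Rightarrow> bool) \<Rightarrow> 'a list set \<Rightarrow> 'a set" where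
  "ends E S = {v. \<exists>p. path_comp E S p \<and> (v = hd p \<or> v = last p)}"

definition cyc_verts :: "('a \<Rightarrow> 'a \<Rightarrow> bool) \<Rightarrow> 'a list set \<Rightarrow> 'a set" where
  "cyc_verts E S = {v. \<exists>p\<in>S. cycle_comp E p \<and> v \<in> set p}"

definition V1 :: "('a \<Rightarrow> 'a \<Rightarrow> bool) \<Rightarrow> 'a list set \<Rightarrow> 'a set" where
  "V1 E S = ends E S \<union> cyc_verts E S"

definition V2 :: "'a set \<Rightarrow> ('a \<Rightarrow> 'a \<Rightarrow> bool) \<Rightarrow> 'a list set \<Rightarrow> 'a set" where
  "V2 V E S = {v\<in>V. v \<notin> V1 E S \<and> (\<exists>y\<in>V1 E S. free_edge E S v y)}"

definition V3 :: "'a set \<Rightarrow> ('a \<Rightarrow> 'a \<Rightarrow> bool) \<Rightarrow> 'a list set \<Rightarrow> 'a set" where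
  "V3 V E S = {v\<in>V. v \<notin> V1 E S \<and> v \<notin> V2 V E S \<and> (\<forall>u. path_nbr E S u v \<longrightarrow> u \<in> V2 V E S)}"

text \<open>x goes to y: xy is a balanced edge with x in V2 and y in V1.\<close>
definition goes_to :: "'a set \<Rightarrow> ('a \<Rightarrow> 'a \<Rightarrow> bool) \<Rightarrow> 'a list set \<Rightarrow> 'a \<Rightarrow> 'a \<Rightarrow> bool" where
  "goes_to V E S x y \<longleftrightarrow> x \<in> V2 V E S \<and> y \<in> V1 E S \<and> free_edge E S x y"

definition moderate :: "'a set \<Rightarrow> ('a \<Rightarrow> 'a \<Rightarrow> bool) \<Rightarrow> 'a list set \<Rightarrow> 'a \<Rightarrow> bool" where
  "moderate V E S x \<longleftrightarrow> x \<in> V2 V E S \<and> card {y. goes_to V E S x y} \<ge> 2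
     \<and> (\<exists>y\<in>ends E S. goes_to V E S x y)"

definition heavy :: "'a set \<Rightarrow> ('a \<Rightarrow> 'a \<Rightarrow> bool) \<Rightarrow> 'a list set \<Rightarrow> 'a \<Rightarrow> bool" where
  "heavy V E S x \<longleftrightarrow> x \<in> V2 V E S \<and> card {y\<in>ends E S. goes_to V E S x y} \<ge> 3"

definition dangerous :: "'a set \<Rightarrow> ('a \<Rightarrow> 'a \<Rightarrow> bool) \<Rightarrow> 'a list set \<Rightarrow> 'a \<Rightarrow> bool" where
  "dangerous V E S v \<longleftrightarrow> v \<in> V3 V E S \<and> (\<exists>u w. u \<noteq> w \<and> path_nbr E S u v \<and> path_nbr E S w v
      \<and> heavy V E S u \<and> moderate V E S w)"

definition cycle_of :: "('a \<Rightarrow> 'a \<Rightarrow> bool) \<Rightarrow> 'a list set \<Rightarrow> 'a \<Rightarrow> 'a list" where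
  "cycle_of E S y = (THE C. C \<in> S \<and> cycle_comp E C \<and> y \<in> set C)"

definition weight :: "('a \<Rightarrow> 'a \<Rightarrow> bool) \<Rightarrow> 'a list set \<Rightarrow> 'a \<Rightarrow> real" where
  "weight E S y = (if y \<in> ends E S then 2/3
     else if y \<in> cyc_verts E S \<and> card (set (cycle_of E S y)) \<le> 6
       then 1 / real (card (set (cycle_of E S y))) else 0)"

definition bval :: "'a set \<Rightarrow> ('a \<Rightarrow> 'a \<Rightarrow> bool) \<Rightarrow> 'a list set \<Rightarrow> 'a set \<Rightarrow> real" where
  "bval V E S Y = (\<Sum>x\<in>Y. \<Sum>y\<in>{y. goes_to V E S x y}. weight E S y)"

end

theory Submission
  imports Defs
begin


lemma is_path_append:
  assumes "is_path E xs" "is_path E ys" "set xs \<inter> set ys = {}" "E (last xs) (hd ys)"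
  shows "is_path E (xs @ ys)"
  unfolding is_path_def
proof (intro conjI allI impI)
  show "xs @ ys \<noteq> []" using assms(1) by (simp add: is_path_def)
  show "distinct (xs @ ys)" using assms by (simp add: is_path_def)
  fix j assume j: "Suc j < length (xs @ ys)"
  consider "Suc j < length xs" | "Suc j = length xs" | "length xs \<le> j" by linarith
  then show "E ((xs @ ys) ! j) ((xs @ ys) ! Suc j)"
  proof cases
    case 1 then show ?thesis using assms(1) by (simp add: is_path_def nth_append)
  next
    case 2
    have xs: "xs \<noteq> []" using assms(1) by (simp add: is_path_def)
    have ys: "ys \<noteq> []" using assms(2) by (simp add: is_path_def)
    have jj: "j = length xs - 1" using 2 by simp
    have "(xs @ ys) ! j = last xs" using 2 xs jj by (simp add: nth_append last_conv_nth)
    moreover have "(xs @ ys) ! Suc j = hd ys" using 2 ys by (simp add: nth_append hd_conv_nth)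
    ultimately show ?thesis using assms(4) by simp
  next
    case 3
    then have "Suc (j - length xs) < length ys" using j by simp
    then have "E (ys ! (j - length xs)) (ys ! Suc (j - length xs))" using assms(2) by (simp add: is_path_def)
    moreover have "Suc j - length xs = Suc (j - length xs)" using 3 by simp
    ultimately show ?thesis using 3 by (simp add: nth_append)
  qed
qed

lemma is_path_rev:
  assumes "\<And>u v. E u v \<Longrightarrow> E v u" "is_path E p"
  shows "is_path E (rev p)"
  unfolding is_path_def
proof (intro conjI allI impI)
  show "rev p \<noteq> []" "distinct (rev p)" using assms(2) by (auto simp: is_path_def)
  fix j assume j: "Suc j < length (rev p)"
  let ?k = "length p - Suc (Suc j)"
  have k: "Suc ?k < length p" using j by simp
  have "E (p ! ?k) (p ! Suc ?k)" using assms(2) k by (simp add: is_path_def)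
  moreover have "rev p ! j = p ! Suc ?k" using j by (simp add: rev_nth Suc_diff_Suc)
  moreover have "rev p ! Suc j = p ! ?k" using j by (simp add: rev_nth)
  ultimately show "E (rev p ! j) (rev p ! Suc j)" using assms(1) by simp
qed

lemma is_path_take:
  assumes "is_path E p" "0 < n" shows "is_path E (take n p)"
  using assms by (auto simp: is_path_def distinct_take)

lemma is_path_drop:
  assumes "is_path E p" "n < length p" shows "is_path E (drop n p)"
  using assms by (auto simp: is_path_def distinct_drop add.commute)



lemma repl_pp:
  assumes pp: "path_partition V E S" and RS: "R \<subseteq> S" and fN: "finite N"
    and pN: "\<forall>p\<in>N. is_path E p"
    and dN: "\<forall>p\<in>N. \<forall>q\<in>N. p \<noteq> q \<longrightarrow> set p \<inter> set q = {}"
    and uN: "(\<Union>p\<in>N. set p) = (\<Union>p\<in>R. set p)"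
  shows "path_partition V E ((S - R) \<union> N)"
proof -
  have fS: "finite S" and pS: "\<forall>p\<in>S. is_path E p" and uS: "(\<Union>p\<in>S. set p) = V"
    and dS: "\<forall>p\<in>S. \<forall>q\<in>S. p \<noteq> q \<longrightarrow> set p \<inter> set q = {}"
    using pp unfolding path_partition_def by blast+
  have u: "(\<Union>p\<in>(S - R) \<union> N. set p) = V"
  proof -
    have "(\<Union>p\<in>(S - R) \<union> N. set p) = (\<Union>p\<in>S - R. set p) \<union> (\<Union>p\<in>R. set p)"
      using uN by (simp add: UN_Un)
    also have "\<dots> = (\<Union>p\<in>S. set p)" using RS by blast
    finally show ?thesis using uS by simp
  qed
  have d1: "set p \<inter> set q = {}" if pN1: "p \<in> N" and qSR: "q \<in> S - R" for p q
  proof -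
    have "set p \<subseteq> (\<Union>r\<in>R. set r)" using uN pN1 by (metis UN_upper)
    moreover have "set r \<inter> set q = {}" if r: "r \<in> R" for r
    proof -
      have "r \<in> S" "q \<in> S" "r \<noteq> q" using r RS qSR by auto
      then show ?thesis using dS by blast
    qed
    ultimately show ?thesis by blast
  qed
  have d: "\<forall>p\<in>(S - R) \<union> N. \<forall>q\<in>(S - R) \<union> N. p \<noteq> q \<longrightarrow> set p \<inter> set q = {}"
  proof (intro ballI impI)
    fix p q assume p: "p \<in> (S - R) \<union> N" and q: "q \<in> (S - R) \<union> N" and pq: "p \<noteq> q"
    show "set p \<inter> set q = {}"
    proof (cases "p \<in> N")
      case True
      show ?thesis
      proof (cases "q \<in> N")
        case True then show ?thesis using dN \<open>p \<in> N\<close> pq by blast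
      next
        case False then show ?thesis using d1 \<open>p \<in> N\<close> q by blast
      qed
    next
      case False
      then have pSR: "p \<in> S - R" using p by blast
      show ?thesis
      proof (cases "q \<in> N")
        case True then show ?thesis using d1[OF True pSR] by blast
      next
        case False then show ?thesis using dS pSR q pq by blast
      qed
    qed
  qed
  have p': "\<forall>p\<in>(S - R) \<union> N. is_path E p" using pS pN by blast
  have f': "finite ((S - R) \<union> N)" using fS fN by simp
  show ?thesis unfolding path_partition_def by (intro conjI f' p' u d)
qed

lemma exch_count:
  assumes C: "canonical V E S" and RS: "R \<subseteq> S" and fN: "finite N"
    and pN: "\<forall>p\<in>N. is_path E p"
    and dN: "\<forall>p\<in>N. \<forall>q\<in>N. p \<noteq> q \<longrightarrow> set p \<inter> set q = {}"
    and uN: "(\<Union>p\<in>N. set p) = (\<Union>p\<in>R. set p)"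
    and lt: "card N < card R"
  shows False
proof -
  have pp: "path_partition V E S" using C by (simp add: canonical_def)
  have fS: "finite S" using pp by (simp add: path_partition_def)
  have pp': "path_partition V E ((S - R) \<union> N)" by (rule repl_pp[OF pp RS fN pN dN uN])
  then have "card S \<le> card ((S - R) \<union> N)" using C by (simp add: canonical_def)
  also have "\<dots> \<le> card (S - R) + card N" by (rule card_Un_le)
  also have "card (S - R) = card S - card R" using RS fS by (simp add: card_Diff_subset finite_subset)
  finally have "card S \<le> card S - card R + card N" .
  moreover have "card R \<le> card S" using RS fS by (simp add: card_mono)
  ultimately show False using lt by linarith
qed

lemma exch_cycle:
  assumes C: "canonical V E S" and RS: "R \<subseteq> S" and fN: "finite N"
    and pN: "\<forall>p\<in>N. is_path E p"
    and dN: "\<forall>p\<in>N. \<forall>q\<in>N. p \<noteq> q \<longrightarrow> set p \<inter> set q = {}"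
    and uN: "(\<Union>p\<in>N. set p) = (\<Union>p\<in>R. set p)"
    and le: "card N \<le> card R"
    and nc: "\<forall>r\<in>R. \<not> cycle_comp E r"
    and tN: "t \<in> N" and tc: "cycle_comp E t" and tS: "t \<notin> S"
  shows False
proof -
  have pp: "path_partition V E S" using C by (simp add: canonical_def)
  have fS: "finite S" using pp by (simp add: path_partition_def)
  have pp': "path_partition V E ((S - R) \<union> N)" by (rule repl_pp[OF pp RS fN pN dN uN])
  then have c1: "card S \<le> card ((S - R) \<union> N)" using C by (simp add: canonical_def)
  have "card ((S - R) \<union> N) \<le> card (S - R) + card N" by (rule card_Un_le)
  also have "card (S - R) = card S - card R" using RS fS by (simp add: card_Diff_subset finite_subset)
  finally have c2: "card ((S - R) \<union> N) \<le> card S - card R + card N" .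
  have "card R \<le> card S" using RS fS by (simp add: card_mono)
  then have eq: "card ((S - R) \<union> N) = card S" using c1 c2 le by linarith
  then have "num_cycles E ((S - R) \<union> N) \<le> num_cycles E S" using C pp' by (simp add: canonical_def)
  moreover have "num_cycles E S < num_cycles E ((S - R) \<union> N)"
  proof -
    have sub: "insert t {p\<in>S. cycle_comp E p} \<subseteq> {p\<in>(S - R) \<union> N. cycle_comp E p}"
      using nc tN tc by blast
    have "finite {p\<in>(S - R) \<union> N. cycle_comp E p}" using fS fN by simp
    then have "card (insert t {p\<in>S. cycle_comp E p}) \<le> card {p\<in>(S - R) \<union> N. cycle_comp E p}"
      using sub card_mono by blast
    moreover have "card (insert t {p\<in>S. cycle_comp E p}) = Suc (card {p\<in>S. cycle_comp E p})"
      using tS fS by simp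
    ultimately show ?thesis by (simp add: num_cycles_def)
  qed
  ultimately show False by simp
qed

lemma cycle_ham:
  assumes sym: "\<And>u v. E u v \<Longrightarrow> E v u" and cc: "cycle_comp E A" and y: "y \<in> set A"
  shows "\<exists>L. is_path E L \<and> set L = set A \<and> hd L = y \<and> length L = length (remdups A)"
proof -
  obtain q where dq: "distinct q" and sq: "set q = set A"
    and eq: "\<forall>i. Suc i < length q \<longrightarrow> E (q!i) (q!Suc i)" and lh: "E (last q) (hd q)"
    using cc unfolding cycle_comp_def by blast
  have pq: "is_path E q" using dq eq y sq unfolding is_path_def by auto
  obtain us ws where q: "q = us @ y # ws" using y sq split_list by fastforce
  let ?L = "(y # ws) @ us"
  have "is_path E ?L"
  proof (cases "us = []")
    case True then show ?thesis using pq q by simp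
  next
    case False
    have a: "y # ws = drop (length us) q" using q by simp
    have b: "us = take (length us) q" using q by simp
    have p1: "is_path E (y # ws)" using a is_path_drop[OF pq, of "length us"] q by simp
    have p2: "is_path E us" using b is_path_take[OF pq, of "length us"] False by simp
    have "set (y # ws) \<inter> set us = {}" using dq q by auto
    moreover have "last (y # ws) = last q" using q by simp
    moreover have "hd us = hd q" using q False by simp
    ultimately show ?thesis using is_path_append[OF p1 p2] lh by simp
  qed
  moreover have "set ?L = set A" using sq q by auto
  moreover have "length ?L = length (remdups A)"
  proof -
    have "length ?L = length q" using q by simp
    also have "\<dots> = card (set q)" using dq by (simp add: distinct_card)
    also have "\<dots> = length (remdups A)" using sq by (simp add: length_remdups_card_conv)
    finally show ?thesis .
  qed
  ultimately show ?thesis by auto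
qed



locale stp =
  fixes V :: "'a set" and E :: "'a \<Rightarrow> 'a \<Rightarrow> bool" and S :: "'a list set"
    and P0 P :: "'a list" and i :: nat
  assumes G: "simple_graph V E" and R6: "regular V E 6" and C: "canonical V E S"
    and P0c: "path_comp E S P0" and PP: "P = P0 \<or> P = rev P0"
    and Li: "Suc i < length P" and X1: "P ! i \<in> V2 V E S" and X2: "P ! Suc i \<in> V2 V E S"
begin

lemma symE: "E u v \<Longrightarrow> E v u" using G by (simp add: simple_graph_def)
lemma EV: "E u v \<Longrightarrow> u \<in> V \<and> v \<in> V" using G by (simp add: simple_graph_def)
lemma finV: "finite V" using G by (simp add: simple_graph_def)

lemma pp: "path_partition V E S" using C by (simp add: canonical_def)
lemma finS: "finite S" using pp by (simp add: path_partition_def)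
lemma pathS: "p \<in> S \<Longrightarrow> is_path E p" using pp by (simp add: path_partition_def)
lemma disjS: "p \<in> S \<Longrightarrow> q \<in> S \<Longrightarrow> p \<noteq> q \<Longrightarrow> set p \<inter> set q = {}"
  using pp by (simp add: path_partition_def)
lemma unionS: "(\<Union>p\<in>S. set p) = V" using pp by (simp add: path_partition_def)
lemma uniq: "A \<in> S \<Longrightarrow> B \<in> S \<Longrightarrow> y \<in> set A \<Longrightarrow> y \<in> set B \<Longrightarrow> A = B"
  using disjS by blast
lemma len2: "p \<in> S \<Longrightarrow> 2 \<le> length p" using C by (simp add: canonical_def)

lemma P0S: "P0 \<in> S" and P0nc: "\<not> cycle_comp E P0" using P0c by (auto simp: path_comp_def)
lemma setP: "set P = set P0" using PP by auto
lemma lenP: "length P = length P0" using PP by auto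
lemma pathP: "is_path E P" using PP pathS[OF P0S] is_path_rev[of E P0] symE by blast
lemma distP: "distinct P" using pathP by (simp add: is_path_def)
lemma Pne: "P \<noteq> []" using pathP by (simp add: is_path_def)

lemma pnbr: assumes "Suc j < length P" shows "path_nbr E S (P!j) (P!Suc j)"
proof (cases "P = P0")
  case True show ?thesis unfolding path_nbr_def
    by (rule exI[of _ P0], rule conjI[OF P0c], rule exI[of _ j]) (use assms lenP True in simp)
next
  case False
  then have r: "P = rev P0" using PP by simp
  let ?k = "length P0 - Suc (Suc j)"
  have k: "Suc ?k < length P0" using assms lenP by simp
  have e1: "P ! j = P0 ! Suc ?k" using assms r by (simp add: rev_nth Suc_diff_Suc)
  have e2: "P ! Suc j = P0 ! ?k" using assms r by (simp add: rev_nth)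
  show ?thesis unfolding path_nbr_def
    by (rule exI[of _ P0], rule conjI[OF P0c], rule exI[of _ ?k]) (use k e1 e2 in simp)
qed

lemma hd_ends: "hd P \<in> ends E S" and last_ends: "last P \<in> ends E S"
  using PP P0c unfolding ends_def by (auto simp: hd_rev last_rev)

lemma V1P: assumes "y \<in> V1 E S" "y \<in> set P" shows "y = hd P \<or> y = last P"
proof -
  have y0: "y \<in> set P0" using assms setP by simp
  show ?thesis
  proof (cases "y \<in> ends E S")
    case True
    then obtain Q where Q: "path_comp E S Q" "y = hd Q \<or> y = last Q" unfolding ends_def by blast
    have "Q \<in> S" using Q by (simp add: path_comp_def)
    moreover have "Q \<noteq> []" using Q by (auto simp: path_comp_def)
    ultimately have "y \<in> set Q" using Q by auto
    then have "Q = P0" using uniq P0S \<open>Q \<in> S\<close> y0 by blast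
    then show ?thesis using Q PP by (auto simp: hd_rev last_rev)
  next
    case False
    then have "y \<in> cyc_verts E S" using assms by (simp add: V1_def)
    then obtain Cc where "Cc \<in> S" "cycle_comp E Cc" "y \<in> set Cc" unfolding cyc_verts_def by blast
    then have "Cc = P0" using uniq P0S y0 by blast
    then show ?thesis using P0nc \<open>cycle_comp E Cc\<close> by simp
  qed
qed

abbreviation "x1 \<equiv> P ! i"
abbreviation "x2 \<equiv> P ! Suc i"
abbreviation "o1 \<equiv> hd P"
abbreviation "o2 \<equiv> last P"
abbreviation "T1 \<equiv> {y. goes_to V E S x1 y}"
abbreviation "T2 \<equiv> {y. goes_to V E S x2 y}"

lemma x1nV1: "x1 \<notin> V1 E S" and x2nV1: "x2 \<notin> V1 E S" using X1 X2 by (auto simp: V2_def)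

lemma ipos: "0 < i"
proof (rule ccontr)
  assume "\<not> 0 < i"
  then have "x1 = o1" using Pne by (simp add: hd_conv_nth)
  then show False using x1nV1 hd_ends by (simp add: V1_def)
qed

lemma i2: "Suc (Suc i) < length P"
proof (rule ccontr)
  assume "\<not> Suc (Suc i) < length P"
  then have "Suc i = length P - 1" using Li by simp
  then have "x2 = o2" using Pne by (simp add: last_conv_nth)
  then show False using x2nV1 last_ends by (simp add: V1_def)
qed

lemma goesE: assumes "goes_to V E S x y"
  shows "E x y" "y \<in> V1 E S" "\<not> path_nbr E S x y" "x \<in> V2 V E S"
  using assms by (auto simp: goes_to_def free_edge_def)

lemma attach:
  assumes "y \<in> V1 E S" "y \<notin> set P"
  shows "\<exists>A L. A \<in> S \<and> A \<noteq> P0 \<and> y \<in> set A \<and> is_path E L \<and> set L = set A \<and> hd L = y"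
proof (cases "y \<in> ends E S")
  case True
  then obtain Q where Q: "path_comp E S Q" "y = hd Q \<or> y = last Q" unfolding ends_def by blast
  have QS: "Q \<in> S" using Q by (simp add: path_comp_def)
  have Qne: "Q \<noteq> []" using Q by (auto simp: path_comp_def)
  then have yQ: "y \<in> set Q" using Q by auto
  have "Q \<noteq> P0" using yQ assms(2) setP by auto
  moreover have "is_path E Q" "is_path E (rev Q)" using pathS[OF QS] is_path_rev[of E Q] symE by auto
  ultimately show ?thesis using Q QS yQ Qne by (metis hd_rev set_rev)
next
  case False
  then have "y \<in> cyc_verts E S" using assms by (simp add: V1_def)
  then obtain Cc where Cc: "Cc \<in> S" "cycle_comp E Cc" "y \<in> set Cc" unfolding cyc_verts_def by blast
  have "Cc \<noteq> P0" using Cc P0nc by auto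
  moreover obtain L where "is_path E L" "set L = set Cc" "hd L = y"
    using cycle_ham[OF _ Cc(2) Cc(3)] symE by blast
  ultimately show ?thesis using Cc by blast
qed

lemma endsA: assumes "y \<in> ends E S" "A \<in> S" "y \<in> set A"
  shows "\<not> cycle_comp E A" "y = hd A \<or> y = last A"
proof -
  obtain Q where Q: "path_comp E S Q" "y = hd Q \<or> y = last Q" using assms(1) unfolding ends_def by blast
  have QS: "Q \<in> S" using Q by (simp add: path_comp_def)
  have "Q \<noteq> []" using Q by (auto simp: path_comp_def)
  then have "y \<in> set Q" using Q by auto
  then have "Q = A" using uniq QS assms by blast
  then show "\<not> cycle_comp E A" "y = hd A \<or> y = last A" using Q by (auto simp: path_comp_def)
qed

lemma nonendA: assumes "y \<in> V1 E S" "y \<notin> ends E S" "A \<in> S" "y \<in> set A"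
  shows "cycle_comp E A"
proof -
  have "y \<in> cyc_verts E S" using assms by (simp add: V1_def)
  then obtain Cc where Cc: "Cc \<in> S" "cycle_comp E Cc" "y \<in> set Cc" unfolding cyc_verts_def by blast
  then show ?thesis using uniq assms by metis
qed

lemma w_end: "y \<in> ends E S \<Longrightarrow> weight E S y = 2/3" by (simp add: weight_def)

lemma w_cyc: assumes "y \<in> V1 E S" "y \<notin> ends E S" "A \<in> S" "y \<in> set A"
  shows "weight E S y = (if card (set A) \<le> 6 then 1 / real (card (set A)) else 0)"
    and "3 \<le> card (set A)"
proof -
  have cA: "cycle_comp E A" by (rule nonendA[OF assms])
  have "cycle_of E S y = A" unfolding cycle_of_def
  proof (rule the_equality)
    show "A \<in> S \<and> cycle_comp E A \<and> y \<in> set A" using cA assms by simp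
    show "\<And>Cc. Cc \<in> S \<and> cycle_comp E Cc \<and> y \<in> set Cc \<Longrightarrow> Cc = A" using uniq assms by blast
  qed
  moreover have "y \<in> cyc_verts E S" using assms by (simp add: V1_def)
  ultimately show "weight E S y = (if card (set A) \<le> 6 then 1 / real (card (set A)) else 0)"
    using assms(2) by (simp add: weight_def)
  have "distinct A" using pathS[OF assms(3)] by (simp add: is_path_def)
  then show "3 \<le> card (set A)" using cA by (simp add: cycle_comp_def distinct_card)
qed

lemma w_nonend: assumes "y \<in> V1 E S" "y \<notin> ends E S" shows "weight E S y \<le> 1/3"
proof -
  have "y \<in> cyc_verts E S" using assms by (simp add: V1_def)
  then obtain Cc where Cc: "Cc \<in> S" "y \<in> set Cc" unfolding cyc_verts_def by blast
  have k: "3 \<le> card (set Cc)" using w_cyc[OF assms Cc] by simp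
  then have "1 / real (card (set Cc)) \<le> 1/3" by (simp add: divide_simps)
  then show ?thesis using w_cyc(1)[OF assms Cc] by simp
qed

lemma w_nn: "0 \<le> weight E S y" by (simp add: weight_def)

lemma w_le: "y \<in> V1 E S \<Longrightarrow> weight E S y \<le> 2/3"
  using w_end w_nonend by (cases "y \<in> ends E S") fastforce+

end


context stp begin

abbreviation "tk \<equiv> take (Suc i) P"
abbreviation "dr \<equiv> drop (Suc i) P"

lemma tk_path: "is_path E tk" using is_path_take[OF pathP] by simp
lemma dr_path: "is_path E dr" using is_path_drop[OF pathP Li] .
lemma last_tk: "last tk = x1"
proof -
  have "tk = take i P @ [P ! i]" using Li by (simp add: take_Suc_conv_app_nth)
  then show ?thesis by simp
qed
lemma hd_dr: "hd dr = x2" using Li by (simp add: hd_drop_conv_nth)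
lemma hd_tk: "hd tk = o1" using Pne by (cases P) auto
lemma last_dr: "last dr = o2" using Li by simp
lemma disj_td: "set tk \<inter> set dr = {}" using distP by (simp add: set_take_disj_set_drop_if_distinct)
lemma un_td: "set tk \<union> set dr = set P" by (metis append_take_drop_id set_append)
lemma tk_ne: "tk \<noteq> []" and dr_ne: "dr \<noteq> []" using tk_path dr_path by (auto simp: is_path_def)

lemma disjA: "A \<in> S \<Longrightarrow> A \<noteq> P0 \<Longrightarrow> set A \<inter> set P = {}"
  using disjS P0S setP by auto

lemma card2: "A \<noteq> P0 \<Longrightarrow> card {P0, A} = 2" by simp
lemma card3: "A \<noteq> P0 \<Longrightarrow> B \<noteq> P0 \<Longrightarrow> A \<noteq> B \<Longrightarrow> card {P0, A, B} = 3" by simp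
lemma cardpair: "card {a, b} \<le> 2" by (simp add: card_insert_if)

lemma F1:
  assumes g1: "goes_to V E S x1 y1" and y1: "y1 \<notin> set P" and g2: "goes_to V E S x2 o1"
  shows False
proof -
  obtain A L where A: "A \<in> S" "A \<noteq> P0" "y1 \<in> set A" and L: "is_path E L" "set L = set A" "hd L = y1"
    using attach[OF goesE(2)[OF g1] y1] by blast
  have p1: "is_path E (rev tk @ dr)"
    by (rule is_path_append[OF is_path_rev[OF symE tk_path] dr_path])
       (use disj_td hd_dr hd_tk goesE(1)[OF g2] symE tk_ne in \<open>auto simp: last_rev\<close>)
  have p2: "is_path E (rev L @ rev tk @ dr)"
    by (rule is_path_append[OF is_path_rev[OF symE L(1)] p1])
       (use disjA[OF A(1,2)] L un_td last_tk goesE(1)[OF g1] symE tk_ne in \<open>auto simp: last_rev hd_rev\<close>)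
  show False
    by (rule exch_count[OF C, of "{P0, A}" "{rev L @ rev tk @ dr}"])
       (use A P0S p2 L un_td setP in auto)
qed

lemma F2:
  assumes g1: "goes_to V E S x1 o2" and g2: "goes_to V E S x2 y2" and y2: "y2 \<notin> set P"
  shows False
proof -
  obtain A L where A: "A \<in> S" "A \<noteq> P0" "y2 \<in> set A" and L: "is_path E L" "set L = set A" "hd L = y2"
    using attach[OF goesE(2)[OF g2] y2] by blast
  have p1: "is_path E (rev dr @ L)"
    by (rule is_path_append[OF is_path_rev[OF symE dr_path] L(1)])
       (use disjA[OF A(1,2)] L un_td hd_dr goesE(1)[OF g2] dr_ne in \<open>auto simp: last_rev\<close>)
  have p2: "is_path E (tk @ rev dr @ L)"
    by (rule is_path_append[OF tk_path p1])
       (use disjA[OF A(1,2)] L un_td disj_td last_tk last_dr goesE(1)[OF g1] dr_ne in \<open>auto simp: hd_rev\<close>)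
  show False
    by (rule exch_count[OF C, of "{P0, A}" "{tk @ rev dr @ L}"])
       (use A P0S p2 L un_td setP in auto)
qed

lemma F3:
  assumes g1: "goes_to V E S x1 o2" and g2: "goes_to V E S x2 o1"
  shows False
proof -
  have p: "is_path E (tk @ rev dr)"
    by (rule is_path_append[OF tk_path is_path_rev[OF symE dr_path]])
       (use disj_td last_tk last_dr goesE(1)[OF g1] dr_ne in \<open>auto simp: hd_rev\<close>)
  have l: "last (tk @ rev dr) = x2" using hd_dr dr_ne by (simp add: last_rev)
  have h: "hd (tk @ rev dr) = o1" using hd_tk tk_ne by simp
  have s: "set (tk @ rev dr) = set P0" using un_td setP by auto
  have len: "3 \<le> length P0" using i2 ipos lenP by simp
  have "cycle_comp E P0" unfolding cycle_comp_def
    using p l h s len goesE(1)[OF g2] symE by (intro conjI exI[of _ "tk @ rev dr"]) (auto simp: is_path_def)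
  then show False using P0nc by simp
qed

lemma F4:
  assumes g1: "goes_to V E S x1 y1" and g2: "goes_to V E S x2 y2"
    and A: "A \<in> S" "A \<noteq> P0" and B: "B \<in> S" "B \<noteq> P0" and AB: "A \<noteq> B"
    and L1: "is_path E L1" "set L1 = set A" "hd L1 = y1"
    and L2: "is_path E L2" "set L2 = set B" "hd L2 = y2"
  shows False
proof -
  have p1: "is_path E (tk @ L1)"
    by (rule is_path_append[OF tk_path L1(1)])
       (use disjA[OF A] L1 un_td last_tk goesE(1)[OF g1] in auto)
  have p2: "is_path E (rev L2 @ dr)"
    by (rule is_path_append[OF is_path_rev[OF symE L2(1)] dr_path])
       (use disjA[OF B] L2 un_td hd_dr goesE(1)[OF g2] symE L2 in \<open>auto simp: last_rev\<close>)
  have dAB: "set A \<inter> set B = {}" using disjS A B AB by blast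
  have d: "set (tk @ L1) \<inter> set (rev L2 @ dr) = {}"
    using disj_td dAB disjA[OF A] disjA[OF B] L1 L2 un_td by auto
  show False
    by (rule exch_count[OF C, of "{P0, A, B}" "{tk @ L1, rev L2 @ dr}"])
       (use A B AB P0S p1 p2 d L1 L2 un_td setP cardpair[of "tk @ L1" "rev L2 @ dr"] in \<open>auto simp: Int_commute\<close>)
qed

lemma Fsame:
  assumes g1: "goes_to V E S x1 y1" and g2: "goes_to V E S x2 y2"
    and A: "A \<in> S" "A \<noteq> P0"
    and M: "is_path E M" "set M = set A" "hd M = y1" "last M = y2"
  shows False
proof -
  have Mne: "M \<noteq> []" using M(1) by (simp add: is_path_def)
  have p1: "is_path E (M @ dr)"
    by (rule is_path_append[OF M(1) dr_path])
       (use disjA[OF A] M un_td hd_dr goesE(1)[OF g2] symE in auto)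
  have p2: "is_path E (tk @ M @ dr)"
    by (rule is_path_append[OF tk_path p1])
       (use disjA[OF A] M un_td last_tk goesE(1)[OF g1] disj_td Mne in auto)
  show False
    by (rule exch_count[OF C, of "{P0, A}" "{tk @ M @ dr}"])
       (use A P0S p2 M un_td setP in auto)
qed

lemma F7:
  assumes g1: "goes_to V E S x1 y1" and A: "A \<in> S" "A \<noteq> P0" "\<not> cycle_comp E A"
    and L1: "is_path E L1" "set L1 = set A" "hd L1 = y1"
    and g2: "goes_to V E S x2 o2"
  shows False
proof -
  have p1: "is_path E (tk @ L1)"
    by (rule is_path_append[OF tk_path L1(1)])
       (use disjA[OF A(1,2)] L1 un_td last_tk goesE(1)[OF g1] in auto)
  have len: "3 \<le> length dr"
  proof (rule ccontr)
    assume "\<not> 3 \<le> length dr"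
    then have "length P = Suc (Suc (Suc i))" using i2 by simp
    then have "o2 = P ! Suc (Suc i)" using Pne by (simp add: last_conv_nth)
    then show False using pnbr[OF i2] goesE(3)[OF g2] by simp
  qed
  have cd: "cycle_comp E dr" unfolding cycle_comp_def
    using len dr_path last_dr hd_dr goesE(1)[OF g2] symE
    by (intro conjI exI[of _ dr]) (auto simp: is_path_def)
  have dS: "dr \<notin> S"
  proof
    assume "dr \<in> S"
    moreover have "x2 \<in> set dr" using hd_dr dr_ne by (metis list.set_sel(1))
    moreover have "x2 \<in> set P0" using Li setP by (metis nth_mem)
    ultimately have "dr = P0" using uniq P0S by blast
    then show False using cd P0nc by simp
  qed
  have d: "set (tk @ L1) \<inter> set dr = {}" using disj_td disjA[OF A(1,2)] L1 un_td by auto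
  show False
    by (rule exch_cycle[OF C, of "{P0, A}" "{tk @ L1, dr}" dr])
       (use A P0S P0nc p1 dr_path d L1 un_td setP cd dS cardpair[of "tk @ L1" dr] in \<open>auto simp: Int_commute\<close>)
qed

end


context stp begin

lemma OUT:
  assumes g1: "goes_to V E S x1 y1" and g2: "goes_to V E S x2 y2"
    and y1: "y1 \<notin> set P" and y2: "y2 \<notin> set P"
  shows "\<exists>A\<in>S. A \<noteq> P0 \<and> y1 \<in> set A \<and> y2 \<in> set A \<and> (cycle_comp E A \<or> y1 = y2)"
proof -
  obtain A L1 where A: "A \<in> S" "A \<noteq> P0" "y1 \<in> set A" and L1: "is_path E L1" "set L1 = set A" "hd L1 = y1"
    using attach[OF goesE(2)[OF g1] y1] by blast
  obtain B L2 where B: "B \<in> S" "B \<noteq> P0" "y2 \<in> set B" and L2: "is_path E L2" "set L2 = set B" "hd L2 = y2"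
    using attach[OF goesE(2)[OF g2] y2] by blast
  have AB: "A = B" using F4[OF g1 g2 A(1,2) B(1,2) _ L1 L2] by blast
  show ?thesis
  proof (cases "cycle_comp E A")
    case True then show ?thesis using A B AB by blast
  next
    case False
    have e1: "y1 \<in> ends E S" using nonendA[OF goesE(2)[OF g1] _ A(1) A(3)] False by blast
    have e2: "y2 \<in> ends E S" using nonendA[OF goesE(2)[OF g2] _ A(1)] B(3) AB False by blast
    have h1: "y1 = hd A \<or> y1 = last A" using endsA(2)[OF e1 A(1) A(3)] .
    have h2: "y2 = hd A \<or> y2 = last A" using endsA(2)[OF e2 A(1)] B(3) AB by blast
    have pA: "is_path E A" "is_path E (rev A)" using pathS[OF A(1)] is_path_rev[OF symE] by auto
    have Ane: "A \<noteq> []" using pA by (simp add: is_path_def)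
    have "y1 = y2"
    proof (rule ccontr)
      assume ne: "y1 \<noteq> y2"
      then have "(y1 = hd A \<and> y2 = last A) \<or> (y1 = last A \<and> y2 = hd A)" using h1 h2 by blast
      then show False
      proof
        assume "y1 = hd A \<and> y2 = last A"
        then show False using Fsame[OF g1 g2 A(1,2) pA(1)] by simp
      next
        assume "y1 = last A \<and> y2 = hd A"
        then show False using Fsame[OF g1 g2 A(1,2) pA(2)] Ane by (simp add: hd_rev last_rev)
      qed
    qed
    then show ?thesis using A by blast
  qed
qed

lemma cyc_nbr:
  assumes A: "A \<in> S" "cycle_comp E A" "y \<in> set A"
  shows "\<exists>L. is_path E L \<and> set L = set A \<and> hd L = y \<and> last L \<noteq> y"
proof -
  obtain L where L: "is_path E L" "set L = set A" "hd L = y" "length L = length (remdups A)"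
    using cycle_ham[OF symE A(2,3)] by blast
  have "distinct A" using pathS[OF A(1)] by (simp add: is_path_def)
  then have "3 \<le> length L" using L(4) A(2) by (simp add: cycle_comp_def distinct_remdups_id)
  moreover have dL: "distinct L" using L(1) by (simp add: is_path_def)
  moreover have Lne: "L \<noteq> []" using L(1) by (simp add: is_path_def)
  ultimately have "L ! (length L - 1) \<noteq> L ! 0" using nth_eq_iff_index_eq[OF dL, of "length L - 1" 0] by simp
  then have "last L \<noteq> hd L" using Lne by (simp add: last_conv_nth hd_conv_nth)
  then show ?thesis using L by blast
qed

lemma pnbr_sym: "path_nbr E S u v \<Longrightarrow> path_nbr E S v u"
  unfolding path_nbr_def by blast

lemma cardT:
  assumes j: "0 < j" "Suc j < length P"
  shows "card {y. goes_to V E S (P!j) y} \<le> 4" "finite {y. goes_to V E S (P!j) y}"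
proof -
  let ?N = "{u\<in>V. E (P!j) u}"
  let ?a = "P ! (j - 1)" and ?b = "P ! Suc j"
  have "P ! j \<in> set P" using j by simp
  then have "P ! j \<in> set P0" using setP by simp
  then have jV: "P ! j \<in> V" using unionS P0S by blast
  have cN: "card ?N = 6" using R6 jV by (simp add: regular_def)
  have fN: "finite ?N" using finV by simp
  have j1: "Suc (j - 1) = j" using j by simp
  have na: "path_nbr E S (P!j) ?a" using pnbr[of "j - 1"] j j1 pnbr_sym by simp
  have nb: "path_nbr E S (P!j) ?b" using pnbr[of j] j by simp
  have "Suc (j-1) < length P" using j by simp
  then have "E (P ! (j-1)) (P ! Suc (j-1))" using pathP unfolding is_path_def by blast
  then have ea: "E (P!j) ?a" using j1 symE by simp
  have eb: "E (P!j) ?b" using pathP j unfolding is_path_def by simp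
  have ab: "?a \<noteq> ?b" using distP j by (simp add: nth_eq_iff_index_eq)
  have aN: "?a \<in> ?N" using ea EV by simp
  have bN: "?b \<in> ?N" using eb EV by simp
  have sub: "{y. goes_to V E S (P!j) y} \<subseteq> ?N - {?a, ?b}"
  proof
    fix y assume "y \<in> {y. goes_to V E S (P!j) y}"
    then have g: "goes_to V E S (P!j) y" by simp
    have "E (P!j) y" using goesE(1)[OF g] .
    moreover have "\<not> path_nbr E S (P!j) y" using goesE(3)[OF g] .
    ultimately show "y \<in> ?N - {?a, ?b}" using na nb EV by auto
  qed
  have "card (?N - {?a, ?b}) = 4" using cN aN bN ab fN by (simp add: card_Diff_subset)
  moreover have "finite (?N - {?a, ?b})" using fN by simp
  ultimately show "card {y. goes_to V E S (P!j) y} \<le> 4" using sub card_mono by metis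
  show "finite {y. goes_to V E S (P!j) y}" using sub fN finite_subset by blast
qed

end


lemma sum_le_card:
  fixes f :: "'b \<Rightarrow> real"
  assumes "\<And>y. y \<in> T \<Longrightarrow> f y \<le> c"
  shows "sum f T \<le> real (card T) * c"
  using sum_bounded_above[of T f c] assms by simp

lemma nat_bound:
  assumes "(a::nat) < k" "b < k" "a \<le> 4" "b \<le> 4" shows "3 * (a + b) \<le> 5 * k"
proof (cases "k \<le> 4")
  case True
  have "a + 1 \<le> k" "b + 1 \<le> k" using assms by auto
  moreover have "3 * (a + b) = 3 * a + 3 * b" by simp
  ultimately show ?thesis using True by linarith
next
  case False
  have "3 * (a + b) = 3 * a + 3 * b" by simp
  then show ?thesis using False assms by linarith
qed

context stp begin

lemma T_ne1: "\<exists>y. goes_to V E S x1 y"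
  using X1 unfolding V2_def goes_to_def by blast
lemma T_ne2: "\<exists>y. goes_to V E S x2 y"
  using X2 unfolding V2_def goes_to_def by blast

lemma sum_split_o2:
  assumes "finite T" "T \<subseteq> V1 E S"
  shows "sum (weight E S) T \<le> sum (weight E S) (T - {o2}) + 2/3"
proof (cases "o2 \<in> T")
  case True
  then have "sum (weight E S) T = weight E S o2 + sum (weight E S) (T - {o2})"
    using assms(1) by (simp add: sum.remove)
  moreover have "weight E S o2 \<le> 2/3" using w_le last_ends by (simp add: V1_def)
  ultimately show ?thesis by simp
next
  case False then show ?thesis by simp
qed

lemma half:
  assumes n1: "\<not> goes_to V E S x1 o1"
  shows "bval V E S {x1} + bval V E S {x2} \<le> 7/3"
proof -
  let ?w = "weight E S"
  have b1: "bval V E S {x1} = sum ?w T1" by (simp add: bval_def)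
  have b2: "bval V E S {x2} = sum ?w T2" by (simp add: bval_def)
  have f1: "finite T1" and c1: "card T1 \<le> 4" using cardT[of i] ipos Li by auto
  have f2: "finite T2" and c2: "card T2 \<le> 4" using cardT[of "Suc i"] i2 by auto
  obtain e1 where e1: "goes_to V E S x1 e1" using T_ne1 by blast
  obtain e2 where e2: "goes_to V E S x2 e2" using T_ne2 by blast
  have V1T1: "T1 \<subseteq> V1 E S" and V1T2: "T2 \<subseteq> V1 E S" using goesE(2) by blast+
  have o1T2: "\<not> goes_to V E S x2 o1"
  proof
    assume g: "goes_to V E S x2 o1"
    show False
    proof (cases "e1 \<in> set P")
      case True
      then have "e1 = o1 \<or> e1 = o2" using V1P goesE(2)[OF e1] by blast
      then show False using n1 e1 F3[OF _ g] by blast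
    next
      case False then show False using F1[OF e1 _ g] by blast
    qed
  qed
  have nP2: "y \<notin> set P" if "goes_to V E S x2 y" "y \<noteq> o2" for y
    using V1P goesE(2)[OF that(1)] that o1T2 by blast
  have wle: "?w y \<le> 2/3" if "y \<in> V1 E S" for y using w_le that .
  show ?thesis
  proof (cases "goes_to V E S x1 o2")
    case True
    have T2s: "T2 \<subseteq> {o2}"
    proof
      fix y assume "y \<in> T2"
      then have g: "goes_to V E S x2 y" by simp
      show "y \<in> {o2}"
      proof (rule ccontr)
        assume "y \<notin> {o2}"
        then have "y \<notin> set P" using nP2[OF g] by simp
        then show False using F2[OF True g] by blast
      qed
    qed
    then have o2T2: "goes_to V E S x2 o2" using e2 by blast
    have B2: "sum ?w T2 \<le> 2/3"
    proof -
      have "card T2 \<le> card {o2}" using card_mono[OF _ T2s] by simp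
      then have "card T2 \<le> 1" by simp
      moreover have "sum ?w T2 \<le> real (card T2) * (2/3)" by (rule sum_le_card) (use wle V1T2 in blast)
      moreover have "real (card T2) \<le> 1" using \<open>card T2 \<le> 1\<close> by simp
      ultimately show ?thesis by linarith
    qed
    have rest: "?w y \<le> 1/3" if y: "y \<in> T1 - {o2}" for y
    proof -
      have g: "goes_to V E S x1 y" using y by simp
      have yP: "y \<notin> set P" using V1P goesE(2)[OF g] y n1 by blast
      have ne: "y \<notin> ends E S"
      proof
        assume ye: "y \<in> ends E S"
        obtain A L where A: "A \<in> S" "A \<noteq> P0" "y \<in> set A" and L: "is_path E L" "set L = set A" "hd L = y"
          using attach[OF goesE(2)[OF g] yP] by blast
        show False using F7[OF g A(1,2) endsA(1)[OF ye A(1,3)] L o2T2] .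
      qed
      show ?thesis using w_nonend[OF goesE(2)[OF g] ne] .
    qed
    have "sum ?w T1 = ?w o2 + sum ?w (T1 - {o2})" using True f1 by (simp add: sum.remove)
    also have "\<dots> \<le> 2/3 + real (card (T1 - {o2})) * (1/3)"
      using wle[OF goesE(2)[OF True]] sum_le_card[of "T1 - {o2}" ?w "1/3"] rest by force
    also have "card (T1 - {o2}) = card T1 - 1" using True f1 by simp
    finally have "sum ?w T1 \<le> 2/3 + real (card T1 - 1) * (1/3)" .
    moreover have "real (card T1 - 1) \<le> 3" using c1 by linarith
    ultimately have "sum ?w T1 \<le> 5/3" by linarith
    then show ?thesis using b1 b2 B2 by linarith
  next
    case False
    have nP1: "y \<notin> set P" if "goes_to V E S x1 y" for y
      using V1P goesE(2)[OF that] that n1 False by blast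
    show ?thesis
    proof (cases "\<exists>e\<in>T1. e \<in> ends E S")
      case True
      then obtain e where eg: "goes_to V E S x1 e" and ee: "e \<in> ends E S" by blast
      obtain A L where A: "A \<in> S" "A \<noteq> P0" "e \<in> set A" and L: "is_path E L" "set L = set A" "hd L = e"
        using attach[OF goesE(2)[OF eg] nP1[OF eg]] by blast
      have T2s: "T2 \<subseteq> {e}"
      proof
        fix y assume "y \<in> T2"
        then have g: "goes_to V E S x2 y" by simp
        show "y \<in> {e}"
        proof (cases "y = o2")
          case True
          then show ?thesis using F7[OF eg A(1,2) endsA(1)[OF ee A(1,3)] L] g by blast
        next
          case False
          obtain A' where A': "A' \<in> S" "e \<in> set A'" "cycle_comp E A' \<or> e = y"
            using OUT[OF eg g nP1[OF eg] nP2[OF g False]] by blast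
          then show ?thesis using endsA(1)[OF ee A'(1,2)] by simp
        qed
      qed
      then have eT2: "goes_to V E S x2 e" using e2 by blast
      have T1s: "T1 \<subseteq> {e}"
      proof
        fix y assume "y \<in> T1"
        then have g: "goes_to V E S x1 y" by simp
        have "e \<noteq> o2" using nP1[OF eg] Pne by auto
        then obtain A' where A': "A' \<in> S" "e \<in> set A'" "cycle_comp E A' \<or> y = e"
          using OUT[OF g eT2 nP1[OF g] nP2[OF eT2]] by blast
        then show "y \<in> {e}" using endsA(1)[OF ee A'(1,2)] by simp
      qed
      have "T1 = {e}" using T1s eg by blast
      then have "sum ?w T1 \<le> 2/3" using w_end[OF ee] by simp
      moreover have "T2 = {e}" using T2s eT2 by blast
      then have "sum ?w T2 \<le> 2/3" using w_end[OF ee] by simp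
      ultimately show ?thesis using b1 b2 by linarith
    next
      case noend: False
      have w1: "?w y \<le> 1/3" if "y \<in> T1" for y
        using w_nonend goesE(2) that noend by blast
      have B1: "sum ?w T1 \<le> 4/3"
      proof -
        have "sum ?w T1 \<le> real (card T1) * (1/3)" by (rule sum_le_card) (use w1 in blast)
        moreover have "real (card T1) \<le> 4" using c1 by simp
        ultimately show ?thesis by linarith
      qed
      show ?thesis
      proof (cases "T2 \<subseteq> {o2}")
        case True
        have "sum ?w T2 \<le> sum ?w (T2 - {o2}) + 2/3" using sum_split_o2[OF f2 V1T2] .
        moreover have "T2 - {o2} = {}" using True by blast
        ultimately show ?thesis using b1 b2 B1 by simp
      next
        case False
        then obtain y2 where g2: "goes_to V E S x2 y2" and y2o: "y2 \<noteq> o2" by blast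
        have y2P: "y2 \<notin> set P" using nP2[OF g2 y2o] .
        obtain A where A: "A \<in> S" "A \<noteq> P0" "e1 \<in> set A" "y2 \<in> set A"
          using OUT[OF e1 g2 nP1[OF e1] y2P] by blast
        have cA: "cycle_comp E A" using nonendA[OF goesE(2)[OF e1] _ A(1,3)] noend e1 by blast
        have T1A: "T1 \<subseteq> set A"
        proof
          fix y assume "y \<in> T1"
          then have g: "goes_to V E S x1 y" by simp
          obtain A' where "A' \<in> S" "y \<in> set A'" "y2 \<in> set A'"
            using OUT[OF g g2 nP1[OF g] y2P] by blast
          then show "y \<in> set A" using uniq A by metis
        qed
        have T2A: "T2 - {o2} \<subseteq> set A"
        proof
          fix y assume "y \<in> T2 - {o2}"
          then have g: "goes_to V E S x2 y" and yo: "y \<noteq> o2" by auto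
          obtain A' where "A' \<in> S" "e1 \<in> set A'" "y \<in> set A'"
            using OUT[OF e1 g nP1[OF e1] nP2[OF g yo]] by blast
          then show "y \<in> set A" using uniq A by metis
        qed
        let ?k = "card (set A)"
        have k3: "3 \<le> ?k" using w_cyc(2)[OF goesE(2)[OF e1] _ A(1,3)] noend e1 by blast
        let ?wA = "(if ?k \<le> 6 then 1 / real ?k else 0) :: real"
        have wA: "?w y = ?wA" if "y \<in> set A" "y \<in> V1 E S" for y
        proof -
          have "y \<notin> ends E S" using endsA(1)[OF _ A(1) that(1)] cA by blast
          then show ?thesis using w_cyc(1)[OF that(2) _ A(1) that(1)] by simp
        qed
        have wA0: "0 \<le> ?wA" by simp
        have wAk: "?wA * real ?k \<le> 1" using k3 by auto
        have fA: "finite (set A)" by simp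
        have T1ne: "\<not> set A \<subseteq> T1"
        proof
          assume sub: "set A \<subseteq> T1"
          obtain L where L: "is_path E L" "set L = set A" "hd L = y2" "last L \<noteq> y2"
            using cyc_nbr[OF A(1) cA A(4)] by blast
          have Lne: "L \<noteq> []" using L(1) by (simp add: is_path_def)
          have "last L \<in> set A" using L(2) Lne by (metis last_in_set)
          then have gz: "goes_to V E S x1 (last L)" using sub by blast
          show False
            using Fsame[OF gz g2 A(1,2) is_path_rev[OF symE L(1)]] L Lne by (simp add: hd_rev last_rev)
        qed
        have T2ne: "\<not> set A \<subseteq> T2 - {o2}"
        proof
          assume sub: "set A \<subseteq> T2 - {o2}"
          obtain L where L: "is_path E L" "set L = set A" "hd L = e1" "last L \<noteq> e1"
            using cyc_nbr[OF A(1) cA A(3)] by blast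
          have Lne: "L \<noteq> []" using L(1) by (simp add: is_path_def)
          have "last L \<in> set A" using L(2) Lne by (metis last_in_set)
          then have gz: "goes_to V E S x2 (last L)" using sub by blast
          show False using Fsame[OF e1 gz A(1,2) L(1-3)] by simp
        qed
        have ck1: "card T1 < ?k" using T1A T1ne fA by (metis psubsetI psubset_card_mono)
        have ck2: "card (T2 - {o2}) < ?k" using T2A T2ne fA by (metis psubsetI psubset_card_mono)
        have c2': "card (T2 - {o2}) \<le> 4" using c2 f2 by (meson card_Diff1_le le_trans)
        have nat: "3 * (card T1 + card (T2 - {o2})) \<le> 5 * ?k" using nat_bound[OF ck1 ck2 c1 c2'] .
        have s1: "sum ?w T1 = real (card T1) * ?wA"
          using sum.cong[of T1 T1 ?w "\<lambda>_. ?wA"] T1A wA V1T1 by (simp add: subset_iff)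
        have s2: "sum ?w (T2 - {o2}) = real (card (T2 - {o2})) * ?wA"
          using sum.cong[of "T2 - {o2}" "T2 - {o2}" ?w "\<lambda>_. ?wA"] T2A wA V1T2 by (simp add: subset_iff)
        have "real (card T1 + card (T2 - {o2})) * ?wA \<le> 5/3"
        proof -
          have r: "3 * real (card T1 + card (T2 - {o2})) \<le> 5 * real ?k" using nat by linarith
          have "3 * (real (card T1 + card (T2 - {o2})) * ?wA) \<le> 5 * (real ?k * ?wA)"
            using mult_right_mono[OF r wA0] by (simp add: algebra_simps)
          also have "\<dots> \<le> 5" using wAk by (simp add: algebra_simps)
          finally show ?thesis by simp
        qed
        moreover have "sum ?w T2 \<le> sum ?w (T2 - {o2}) + 2/3" using sum_split_o2[OF f2 V1T2] .
        ultimately show ?thesis using b1 b2 s1 s2 by (simp add: algebra_simps)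
      qed
    qed
  qed
qed

end


theorem mainTheorem13:
  fixes V :: "'a set" and E :: "'a \<Rightarrow> 'a \<Rightarrow> bool" and S :: "'a list set"
    and P :: "'a list" and o1 o2 x1 x2 :: 'a and i :: nat
  assumes "simple_graph V E"
    and "regular V E 6"
    and "canonical V E S"
    and "path_comp E S P"
    and "o1 = hd P" and "o2 = last P"
    and "Suc i < length P" and "x1 = P ! i" and "x2 = P ! Suc i"
    and "x1 \<in> V2 V E S" and "x2 \<in> V2 V E S"
    and "\<forall>d. dangerous V E S d \<longrightarrow> \<not> free_edge E S x1 d"
    and "\<forall>d. dangerous V E S d \<longrightarrow> \<not> free_edge E S x2 d"
    and "bval V E S {x1} + bval V E S {x2} > 7/3"
  shows "goes_to V E S x1 o1 \<and> goes_to V E S x2 o2"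
proof
  interpret A: stp V E S P P i
    using assms by unfold_locales auto
  show "goes_to V E S x1 o1"
  proof (rule ccontr)
    assume "\<not> goes_to V E S x1 o1"
    then have "bval V E S {x1} + bval V E S {x2} \<le> 7/3" using A.half assms(5,8,9) by simp
    then show False using assms(14) by simp
  qed
  let ?j = "length P - Suc (Suc i)"
  have j1: "rev P ! ?j = P ! Suc i" using assms(7) by (simp add: rev_nth Suc_diff_Suc)
  have j2: "rev P ! Suc ?j = P ! i" using assms(7) by (simp add: rev_nth Suc_diff_Suc)
  interpret B: stp V E S P "rev P" ?j
    using assms j1 j2 by unfold_locales auto
  show "goes_to V E S x2 o2"
  proof (rule ccontr)
    assume "\<not> goes_to V E S x2 o2"
    then have "bval V E S {x2} + bval V E S {x1} \<le> 7/3"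
      using B.half assms(6,8,9) j1 j2 by (simp add: hd_rev)
    then show False using assms(14) by simp
  qed
qed


end
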